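(* Let $X,Y$ be uniform spaces and $f\colon X\to Y$ a function generating the uniform structure on $Y$. Then $f$ is a uniform covering map if and only if (a) $f$ has the chain lifting property and (b) $f$ has the uniqueness of chain lifts property.
   Context: Notation: entourages are symmetric and contain the diagonal; $B(x,E)=\{y:(x,y)\in E\}$; $f(E)=\{(f(x),f(y)):(x,y)\in E\}$. A surjection $f\colon X\to Y$ generates the uniform structure on $Y$ if $\{f(E)\}$ ($E$ entourage of $X$) is a base of the uniform structure of $Y$. The Rips complex $R(X,E)$ is the simplicial complex with vertex set $X$ whose simplices are finite $F\subset X$ with $F\times F\subset E$; $f_E\colon R(X,E)\to R(Y,f(E))$ is the induced simplicial map. $f$ is a uniform covering map if it generates the uniform structure on $Y$ and the entourages $E$ of $X$ for which $f_E$ is a topological covering map form a base of $X$. An $E$-chain is a sequence $x_0,\dots,x_n$ with $(x_i,x_{i+1})\in E$. $f$ has the chain lifting property if for every entourage $E$ of $X$ there is an entourage $F$ of $X$ such that every $f(F)$-chain in $Y$ starting at $f(x_0)$ lifts (via $f$) to an $E$-chain in $X$ starting at $x_0$, for every $x_0\in X$. $f$ has the uniqueness of chain lifts property if for every entourage $E$ there is an entourage $F$ such that any two $F$-chains with common origin and identical images under $f$ are equal. *)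

theory Defs
  imports "HOL-Analysis.Analysis"
begin

definition entourage :: "('a::uniform_space \<times> 'a) set \<Rightarrow> bool" where
  "entourage E \<longleftrightarrow> sym E \<and> Id \<subseteq> E \<and> eventually (\<lambda>p. p \<in> E) uniformity"

definition pimage :: "('a \<Rightarrow> 'b) \<Rightarrow> ('a \<times> 'a) set \<Rightarrow> ('b \<times> 'b) set" where
  "pimage f E = (\<lambda>(x, y). (f x, f y)) ` E"

definition generates_uniformity :: "('a::uniform_space \<Rightarrow> 'b::uniform_space) \<Rightarrow> bool" where
  "generates_uniformity f \<longleftrightarrow> surj f \<and>
     (\<forall>E. entourage E \<longrightarrow> entourage (pimage f E)) \<and>
     (\<forall>D. entourage D \<longrightarrow> (\<exists>E. entourage E \<and> pimage f E \<subseteq> D))"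

definition rips_simplices :: "('a \<times> 'a) set \<Rightarrow> 'a set set" where
  "rips_simplices E = {F. finite F \<and> F \<noteq> {} \<and> F \<times> F \<subseteq> E}"

text \<open>Closed geometric simplex spanned by a finite vertex set, as barycentric coordinate functions.\<close>
definition closed_simplex :: "'a set \<Rightarrow> ('a \<Rightarrow> real) set" where
  "closed_simplex \<sigma> = {\<alpha>. (\<forall>v. 0 \<le> \<alpha> v) \<and> (\<forall>v. v \<notin> \<sigma> \<longrightarrow> \<alpha> v = 0) \<and> sum \<alpha> \<sigma> = 1}"

definition realization_carrier :: "'a set set \<Rightarrow> ('a \<Rightarrow> real) set" where
  "realization_carrier K = (\<Union>\<sigma>\<in>K. closed_simplex \<sigma>)"

text \<open>Geometric realization with the weak (Whitehead) topology: a set is open iff its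
  trace on every closed simplex is open in the Euclidean topology of that simplex.\<close>
definition realization :: "'a set set \<Rightarrow> ('a \<Rightarrow> real) topology" where
  "realization K = topology (\<lambda>U. U \<subseteq> realization_carrier K \<and>
     (\<forall>\<sigma>\<in>K. openin (subtopology (powertop_real UNIV) (closed_simplex \<sigma>)) (U \<inter> closed_simplex \<sigma>)))"

definition rips :: "('a \<times> 'a) set \<Rightarrow> ('a \<Rightarrow> real) topology" where
  "rips E = realization (rips_simplices E)"

text \<open>Affine extension of a vertex map to the realizations.\<close>
definition push :: "('a \<Rightarrow> 'b) \<Rightarrow> ('a \<Rightarrow> real) \<Rightarrow> ('b \<Rightarrow> real)" where
  "push f \<alpha> = (\<lambda>w. \<Sum>v\<in>{v. f v = w \<and> \<alpha> v \<noteq> 0}. \<alpha> v)"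

definition covering_map :: "'a topology \<Rightarrow> 'b topology \<Rightarrow> ('a \<Rightarrow> 'b) \<Rightarrow> bool" where
  "covering_map C B p \<longleftrightarrow>
     continuous_map C B p \<and> p ` topspace C = topspace B \<and>
     (\<forall>b\<in>topspace B. \<exists>T. b \<in> T \<and> openin B T \<and>
        (\<exists>V. \<Union>V = {x \<in> topspace C. p x \<in> T} \<and>
             (\<forall>u\<in>V. openin C u) \<and> pairwise disjnt V \<and>
             (\<forall>u\<in>V. homeomorphic_map (subtopology C u) (subtopology B T) p)))"

definition uniform_covering_map :: "('a::uniform_space \<Rightarrow> 'b::uniform_space) \<Rightarrow> bool" where
  "uniform_covering_map f \<longleftrightarrow> generates_uniformity f \<and>
     (\<forall>D. entourage D \<longrightarrow>
        (\<exists>E. entourage E \<and> E \<subseteq> D \<and> covering_map (rips E) (rips (pimage f E)) (push f)))"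

definition is_chain :: "('a \<times> 'a) set \<Rightarrow> (nat \<Rightarrow> 'a) \<Rightarrow> nat \<Rightarrow> bool" where
  "is_chain E c n \<longleftrightarrow> (\<forall>i<n. (c i, c (Suc i)) \<in> E)"

definition chain_lifting :: "('a::uniform_space \<Rightarrow> 'b) \<Rightarrow> bool" where
  "chain_lifting f \<longleftrightarrow>
     (\<forall>E. entourage E \<longrightarrow> (\<exists>F. entourage F \<and>
        (\<forall>x0 (d :: nat \<Rightarrow> 'b) n. is_chain (pimage f F) d n \<and> d 0 = f x0 \<longrightarrow>
           (\<exists>c. is_chain E c n \<and> c 0 = x0 \<and> (\<forall>i\<le>n. f (c i) = d i)))))"

definition unique_chain_lifts :: "('a::uniform_space \<Rightarrow> 'b) \<Rightarrow> bool" where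
  "unique_chain_lifts f \<longleftrightarrow>
     (\<forall>E :: ('a \<times> 'a) set. entourage E \<longrightarrow> (\<exists>F. entourage F \<and>
        (\<forall>c d n. is_chain F c n \<and> is_chain F d n \<and> c 0 = d 0 \<and> (\<forall>i\<le>n. f (c i) = f (d i))
            \<longrightarrow> (\<forall>i\<le>n. c i = d i))))"

end

theory Submission
  imports Defs
begin

lemma istopology_realization:
  "istopology (\<lambda>U. U \<subseteq> realization_carrier K \<and>
     (\<forall>\<sigma>\<in>K. openin (subtopology (powertop_real UNIV) (closed_simplex \<sigma>)) (U \<inter> closed_simplex \<sigma>)))"
  unfolding istopology_def
proof (rule conjI; intro allI impI)
  fix S T assume S: "S \<subseteq> realization_carrier K \<and>
     (\<forall>\<sigma>\<in>K. openin (subtopology (powertop_real UNIV) (closed_simplex \<sigma>)) (S \<inter> closed_simplex \<sigma>))"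
    and T: "T \<subseteq> realization_carrier K \<and>
     (\<forall>\<sigma>\<in>K. openin (subtopology (powertop_real UNIV) (closed_simplex \<sigma>)) (T \<inter> closed_simplex \<sigma>))"
  show "S \<inter> T \<subseteq> realization_carrier K \<and>
     (\<forall>\<sigma>\<in>K. openin (subtopology (powertop_real UNIV) (closed_simplex \<sigma>)) (S \<inter> T \<inter> closed_simplex \<sigma>))"
  proof (rule conjI[OF _ ballI])
    show "S \<inter> T \<subseteq> realization_carrier K" using S by blast
    fix \<sigma> assume "\<sigma> \<in> K"
    then have "openin (subtopology (powertop_real UNIV) (closed_simplex \<sigma>)) ((S \<inter> closed_simplex \<sigma>) \<inter> (T \<inter> closed_simplex \<sigma>))"
      using S T \<open>\<sigma> \<in> K\<close> by (intro openin_Int[of _ "S \<inter> closed_simplex \<sigma>" "T \<inter> closed_simplex \<sigma>"]) auto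
    moreover have "(S \<inter> closed_simplex \<sigma>) \<inter> (T \<inter> closed_simplex \<sigma>) = S \<inter> T \<inter> closed_simplex \<sigma>" by blast
    ultimately show "openin (subtopology (powertop_real UNIV) (closed_simplex \<sigma>)) (S \<inter> T \<inter> closed_simplex \<sigma>)" by simp
  qed
next
  fix \<K> assume H: "\<forall>K'\<in>\<K>. K' \<subseteq> realization_carrier K \<and>
     (\<forall>\<sigma>\<in>K. openin (subtopology (powertop_real UNIV) (closed_simplex \<sigma>)) (K' \<inter> closed_simplex \<sigma>))"
  show "\<Union>\<K> \<subseteq> realization_carrier K \<and>
     (\<forall>\<sigma>\<in>K. openin (subtopology (powertop_real UNIV) (closed_simplex \<sigma>)) (\<Union>\<K> \<inter> closed_simplex \<sigma>))"
  proof (rule conjI[OF _ ballI])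
    show "\<Union>\<K> \<subseteq> realization_carrier K" using H by blast
    fix \<sigma> assume "\<sigma> \<in> K"
    then have "openin (subtopology (powertop_real UNIV) (closed_simplex \<sigma>)) (\<Union>K'\<in>\<K>. K' \<inter> closed_simplex \<sigma>)"
      using H by (intro openin_Union) auto
    moreover have "(\<Union>K'\<in>\<K>. K' \<inter> closed_simplex \<sigma>) = \<Union>\<K> \<inter> closed_simplex \<sigma>" by blast
    ultimately show "openin (subtopology (powertop_real UNIV) (closed_simplex \<sigma>)) (\<Union>\<K> \<inter> closed_simplex \<sigma>)" by simp
  qed
qed

lemma openin_realization:
  "openin (realization K) U \<longleftrightarrow> U \<subseteq> realization_carrier K \<and>
     (\<forall>\<sigma>\<in>K. openin (subtopology (powertop_real UNIV) (closed_simplex \<sigma>)) (U \<inter> closed_simplex \<sigma>))"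
  unfolding realization_def using istopology_realization[of K] by simp

lemma topspace_realization: "topspace (realization K) = realization_carrier K"
proof -
  have "openin (realization K) (realization_carrier K)"
    unfolding openin_realization
  proof (intro conjI ballI)
    fix \<sigma> assume "\<sigma> \<in> K"
    then have "realization_carrier K \<inter> closed_simplex \<sigma> = topspace (subtopology (powertop_real UNIV) (closed_simplex \<sigma>))"
      by (auto simp: realization_carrier_def)
    then show "openin (subtopology (powertop_real UNIV) (closed_simplex \<sigma>)) (realization_carrier K \<inter> closed_simplex \<sigma>)"
      by (metis openin_topspace)
  qed simp
  then have "realization_carrier K \<subseteq> topspace (realization K)" by (rule openin_subset)
  moreover have "topspace (realization K) \<subseteq> realization_carrier K"
    using openin_realization[of K "topspace (realization K)"] by simp
  ultimately show ?thesis by blast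
qed


definition gam :: "'a \<Rightarrow> 'a \<Rightarrow> real \<Rightarrow> 'a \<Rightarrow> real" where
  "gam x a t = (\<lambda>v. (if v = x then 1 - t else 0) + (if v = a then t else 0))"

lemma cs_zero: "\<alpha> \<in> closed_simplex \<sigma> \<Longrightarrow> \<alpha> v \<noteq> 0 \<Longrightarrow> v \<in> \<sigma>"
  unfolding closed_simplex_def by auto

lemma cs_nonneg: "\<alpha> \<in> closed_simplex \<sigma> \<Longrightarrow> 0 \<le> \<alpha> v"
  unfolding closed_simplex_def by auto

lemma cs_sum: "\<alpha> \<in> closed_simplex \<sigma> \<Longrightarrow> sum \<alpha> \<sigma> = 1"
  unfolding closed_simplex_def by auto

lemma rips_edge: "\<sigma> \<in> rips_simplices E \<Longrightarrow> a \<in> \<sigma> \<Longrightarrow> b \<in> \<sigma> \<Longrightarrow> (a, b) \<in> E"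
  unfolding rips_simplices_def by auto

lemma carrier_iff: "\<alpha> \<in> realization_carrier K \<longleftrightarrow> (\<exists>\<sigma>\<in>K. \<alpha> \<in> closed_simplex \<sigma>)"
  unfolding realization_carrier_def by auto

lemma topspace_rips: "topspace (rips E) = realization_carrier (rips_simplices E)"
  unfolding rips_def by (rule topspace_realization)

lemma openin_rips:
  "openin (rips E) U \<longleftrightarrow> U \<subseteq> realization_carrier (rips_simplices E) \<and>
     (\<forall>\<sigma>\<in>rips_simplices E. openin (subtopology (powertop_real UNIV) (closed_simplex \<sigma>)) (U \<inter> closed_simplex \<sigma>))"
  unfolding rips_def by (rule openin_realization)

lemma openin_star: "openin (rips E) {\<alpha> \<in> realization_carrier (rips_simplices E). 0 < \<alpha> x}"
  unfolding openin_rips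
proof (rule conjI[OF _ ballI])
  fix \<sigma> assume s: "\<sigma> \<in> rips_simplices E"
  have c: "continuous_map (subtopology (powertop_real UNIV) (closed_simplex \<sigma>)) euclideanreal (\<lambda>\<alpha>. \<alpha> x)"
    by (intro continuous_map_from_subtopology continuous_map_product_projection) auto
  have "openin (subtopology (powertop_real UNIV) (closed_simplex \<sigma>))
     {\<alpha> \<in> topspace (subtopology (powertop_real UNIV) (closed_simplex \<sigma>)). \<alpha> x \<in> {0<..}}"
    by (rule openin_continuous_map_preimage[OF c]) auto
  moreover have "{\<alpha> \<in> topspace (subtopology (powertop_real UNIV) (closed_simplex \<sigma>)). \<alpha> x \<in> {0<..}}
     = {\<alpha> \<in> realization_carrier (rips_simplices E). 0 < \<alpha> x} \<inter> closed_simplex \<sigma>"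
    using s by (auto simp: carrier_iff)
  ultimately show "openin (subtopology (powertop_real UNIV) (closed_simplex \<sigma>))
     ({\<alpha> \<in> realization_carrier (rips_simplices E). 0 < \<alpha> x} \<inter> closed_simplex \<sigma>)" by simp
qed auto

lemma gam_cs: "0 \<le> t \<Longrightarrow> t \<le> 1 \<Longrightarrow> gam x a t \<in> closed_simplex {x, a}"
  unfolding closed_simplex_def gam_def by (cases "x = a") auto

lemma gam_0: "gam x a 0 = (\<lambda>v. if v = x then 1 else 0)"
  unfolding gam_def by auto

lemma edge_simplex: "{x, a} \<times> {x, a} \<subseteq> E \<Longrightarrow> {x, a} \<in> rips_simplices E"
  unfolding rips_simplices_def by auto

lemma edge_open:
  assumes U: "openin (rips E) U" and E: "{x, a} \<times> {x, a} \<subseteq> E" and g0: "gam x a 0 \<in> U"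
  shows "\<exists>\<epsilon>>0. \<forall>t. 0 < t \<longrightarrow> t < \<epsilon> \<longrightarrow> gam x a t \<in> U"
proof -
  have "openin (subtopology (powertop_real UNIV) (closed_simplex {x,a})) (U \<inter> closed_simplex {x,a})"
    using U edge_simplex[OF E] unfolding openin_rips by blast
  then obtain W where W: "openin (powertop_real UNIV) W" "U \<inter> closed_simplex {x,a} = W \<inter> closed_simplex {x,a}"
    unfolding openin_subtopology by blast
  have "continuous_map euclideanreal euclideanreal (\<lambda>t. gam x a t k)" for k
    by (cases "k = x"; cases "k = a") (auto simp: gam_def intro!: continuous_intros)
  then have cg: "continuous_map euclideanreal (powertop_real UNIV) (gam x a)"
    unfolding continuous_map_componentwise_UNIV by blast
  have "openin euclideanreal {t \<in> topspace euclideanreal. gam x a t \<in> W}"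
    by (rule openin_continuous_map_preimage[OF cg W(1)])
  then have op: "open {t. gam x a t \<in> W}" by simp
  have "0 \<in> {t. gam x a t \<in> W}" using g0 W(2) gam_cs[of 0 x a] by auto
  then obtain e where e: "e > 0" "\<forall>y. dist y 0 < e \<longrightarrow> y \<in> {t. gam x a t \<in> W}"
    using op unfolding open_dist by blast
  show ?thesis
  proof (intro exI[of _ "min e 1"] conjI allI impI)
    fix t :: real assume t: "0 < t" "t < min e 1"
    then have "gam x a t \<in> W" using e by (auto simp: dist_real_def)
    moreover have "gam x a t \<in> closed_simplex {x,a}" using t by (intro gam_cs) auto
    ultimately show "gam x a t \<in> U" using W(2) by blast
  qed (use e in auto)
qed

lemma push_cs_eq:
  assumes "finite \<sigma>" "\<alpha> \<in> closed_simplex \<sigma>"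
  shows "push f \<alpha> w = sum \<alpha> {v \<in> \<sigma>. f v = w}"
  unfolding push_def
proof (rule sum.mono_neutral_left)
  show "finite {v \<in> \<sigma>. f v = w}" using assms by auto
  show "{v. f v = w \<and> \<alpha> v \<noteq> 0} \<subseteq> {v \<in> \<sigma>. f v = w}" using cs_zero[OF assms(2)] by auto
qed auto

lemma push_cs:
  assumes "finite \<sigma>" "\<alpha> \<in> closed_simplex \<sigma>"
  shows "push f \<alpha> \<in> closed_simplex (f ` \<sigma>)"
  unfolding closed_simplex_def
proof (intro CollectI conjI allI impI)
  fix w
  show "0 \<le> push f \<alpha> w" unfolding push_cs_eq[OF assms]
    by (intro sum_nonneg cs_nonneg[OF assms(2)])
  assume "w \<notin> f ` \<sigma>"
  then have "{v \<in> \<sigma>. f v = w} = {}" by auto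
  then show "push f \<alpha> w = 0" using push_cs_eq[OF assms, of f w] by (metis sum.empty)
next
  have "sum (push f \<alpha>) (f ` \<sigma>) = sum (\<lambda>w. sum \<alpha> {v \<in> \<sigma>. f v = w}) (f ` \<sigma>)"
    by (intro sum.cong refl push_cs_eq[OF assms])
  also have "\<dots> = sum \<alpha> \<sigma>" by (rule sum.group) (use assms in auto)
  finally show "sum (push f \<alpha>) (f ` \<sigma>) = 1" using cs_sum[OF assms(2)] by simp
qed

lemma pimage_mem: "(a, b) \<in> E \<Longrightarrow> (f a, f b) \<in> pimage f E"
  unfolding pimage_def by force

lemma image_simplex: "\<sigma> \<in> rips_simplices E \<Longrightarrow> f ` \<sigma> \<in> rips_simplices (pimage f E)"
  unfolding rips_simplices_def by (auto intro: pimage_mem)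

lemma push_continuous_cs:
  assumes "finite \<sigma>"
  shows "continuous_map (subtopology (powertop_real UNIV) (closed_simplex \<sigma>)) (powertop_real UNIV) (push f)"
  unfolding continuous_map_componentwise_UNIV
proof
  fix w
  have "continuous_map (subtopology (powertop_real UNIV) (closed_simplex \<sigma>)) euclideanreal
          (\<lambda>\<alpha>. sum \<alpha> {v \<in> \<sigma>. f v = w})"
    using assms by (intro continuous_map_sum continuous_map_from_subtopology continuous_map_product_projection) auto
  then show "continuous_map (subtopology (powertop_real UNIV) (closed_simplex \<sigma>)) euclideanreal (\<lambda>\<alpha>. push f \<alpha> w)"
    by (rule continuous_map_eq) (simp add: push_cs_eq[OF assms])
qed

lemma push_continuous: "continuous_map (rips E) (rips (pimage f E)) (push f)"
  unfolding continuous_map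
proof (intro conjI allI impI)
  show "push f ` topspace (rips E) \<subseteq> topspace (rips (pimage f E))"
  proof
    fix \<beta> assume "\<beta> \<in> push f ` topspace (rips E)"
    then obtain \<alpha> where a0: "\<beta> = push f \<alpha>" "\<alpha> \<in> realization_carrier (rips_simplices E)"
      unfolding topspace_rips by blast
    then obtain \<sigma> where a: "\<beta> = push f \<alpha>" "\<sigma> \<in> rips_simplices E" "\<alpha> \<in> closed_simplex \<sigma>"
      unfolding carrier_iff by blast
    then have "finite \<sigma>" unfolding rips_simplices_def by auto
    then have "\<beta> \<in> closed_simplex (f ` \<sigma>)" using a push_cs by blast
    then show "\<beta> \<in> topspace (rips (pimage f E))"
      unfolding topspace_rips carrier_iff using image_simplex[OF a(2)] by blast
  qed
  fix V assume V: "openin (rips (pimage f E)) V"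
  show "openin (rips E) {x \<in> topspace (rips E). push f x \<in> V}"
    unfolding openin_rips
  proof (rule conjI[OF _ ballI])
    fix \<sigma> assume s: "\<sigma> \<in> rips_simplices E"
    then have fin: "finite \<sigma>" unfolding rips_simplices_def by auto
    have "openin (subtopology (powertop_real UNIV) (closed_simplex (f ` \<sigma>))) (V \<inter> closed_simplex (f ` \<sigma>))"
      using V image_simplex[OF s] unfolding openin_rips by blast
    then obtain W where W: "openin (powertop_real UNIV) W" "V \<inter> closed_simplex (f ` \<sigma>) = W \<inter> closed_simplex (f ` \<sigma>)"
      unfolding openin_subtopology by blast
    have "openin (subtopology (powertop_real UNIV) (closed_simplex \<sigma>))
       {\<alpha> \<in> topspace (subtopology (powertop_real UNIV) (closed_simplex \<sigma>)). push f \<alpha> \<in> W}"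
      by (rule openin_continuous_map_preimage[OF push_continuous_cs[OF fin] W(1)])
    moreover have "{\<alpha> \<in> topspace (subtopology (powertop_real UNIV) (closed_simplex \<sigma>)). push f \<alpha> \<in> W}
      = {x \<in> topspace (rips E). push f x \<in> V} \<inter> closed_simplex \<sigma>"
    proof -
      have "\<And>\<alpha>. \<alpha> \<in> closed_simplex \<sigma> \<Longrightarrow> push f \<alpha> \<in> W \<longleftrightarrow> push f \<alpha> \<in> V"
        using W(2) push_cs[OF fin] by blast
      then show ?thesis using s by (auto simp: topspace_rips carrier_iff)
    qed
    ultimately show "openin (subtopology (powertop_real UNIV) (closed_simplex \<sigma>))
      ({x \<in> topspace (rips E). push f x \<in> V} \<inter> closed_simplex \<sigma>)" by simp
  qed (auto simp: topspace_rips)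
qed

lemma push_gam:
  assumes "0 \<le> t" "t \<le> 1"
  shows "push f (gam x a t) = gam (f x) (f a) t"
proof
  fix w
  have "push f (gam x a t) w = sum (gam x a t) {v \<in> {x, a}. f v = w}"
    by (rule push_cs_eq) (use gam_cs[OF assms] in auto)
  also have "\<dots> = gam (f x) (f a) t w"
  proof (cases "x = a")
    case True
    then have "{v \<in> {x, a}. f v = w} = (if f x = w then {x} else {})" by auto
    then show ?thesis using True by (cases "f x = w") (simp_all add: gam_def)
  next
    case False
    then show ?thesis
    proof (cases "f x = w"; cases "f a = w")
      assume "f x = w" "f a = w"
      then have "{v \<in> {x, a}. f v = w} = {x, a}" by auto
      then show ?thesis using False \<open>f x = w\<close> \<open>f a = w\<close> by (simp add: gam_def)
    next
      assume "f x = w" "f a \<noteq> w"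
      then have "{v \<in> {x, a}. f v = w} = {x}" by auto
      then show ?thesis using False \<open>f x = w\<close> \<open>f a \<noteq> w\<close> by (simp add: gam_def)
    next
      assume "f x \<noteq> w" "f a = w"
      then have "{v \<in> {x, a}. f v = w} = {a}" by auto
      then show ?thesis using False \<open>f x \<noteq> w\<close> \<open>f a = w\<close> by (simp add: gam_def)
    next
      assume "f x \<noteq> w" "f a \<noteq> w"
      then have "{v \<in> {x, a}. f v = w} = {}" by auto
      then show ?thesis using False \<open>f x \<noteq> w\<close> \<open>f a \<noteq> w\<close> by (simp only: sum.empty) (simp add: gam_def)
    qed
  qed
  finally show "push f (gam x a t) w = gam (f x) (f a) t w" .
qed


lemma entourage_UNIV: "entourage (UNIV :: ('a::uniform_space \<times> 'a) set)"
  unfolding entourage_def sym_def by auto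

lemma entourage_Id: "entourage E \<Longrightarrow> (x, x) \<in> E"
  unfolding entourage_def by auto

lemma entourage_sym: "entourage E \<Longrightarrow> (x, y) \<in> E \<Longrightarrow> (y, x) \<in> E"
  unfolding entourage_def sym_def by auto

lemma covering_sheet:
  assumes cov: "covering_map C B p" and x: "x \<in> topspace C"
  obtains u where "openin C u" "x \<in> u" "inj_on p u"
    "\<And>U'. openin C U' \<Longrightarrow> U' \<subseteq> u \<Longrightarrow> openin B (p ` U')"
proof -
  have cm: "continuous_map C B p" using cov unfolding covering_map_def by blast
  then have px: "p x \<in> topspace B" using x continuous_map_image_subset_topspace[OF cm] by blast
  note H = conjunct2[OF conjunct2[OF cov[unfolded covering_map_def]]]
  from H[rule_format, OF px] obtain T V where TV: "p x \<in> T" "openin B T" "\<Union>V = {x \<in> topspace C. p x \<in> T}"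
    "\<forall>u\<in>V. openin C u" "\<forall>u\<in>V. homeomorphic_map (subtopology C u) (subtopology B T) p"
    by (elim exE conjE) (rule that; assumption)
  then obtain u where u: "u \<in> V" "x \<in> u" using x by blast
  have ou: "openin C u" using TV u by blast
  have hm: "homeomorphic_map (subtopology C u) (subtopology B T) p" using TV u by blast
  have tu: "topspace (subtopology C u) = u" using openin_subset[OF ou] by auto
  show ?thesis
  proof (rule that[OF ou u(2)])
    show "inj_on p u" using homeomorphic_imp_injective_map[OF hm] tu by simp
    fix U' assume U': "openin C U'" "U' \<subseteq> u"
    then have "openin (subtopology C u) U'"
      unfolding openin_subtopology by (intro exI[of _ U'] conjI) auto
    then have "openin (subtopology B T) (p ` U')"
      using homeomorphic_imp_open_map[OF hm] unfolding open_map_def by blast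
    then show "openin B (p ` U')" using openin_trans_full TV(2) by blast
  qed
qed

lemma vertex_top:
  assumes "entourage E"
  shows "gam x a 0 \<in> topspace (rips E)"
proof -
  have "{x} \<in> rips_simplices E" unfolding rips_simplices_def using entourage_Id[OF assms] by auto
  moreover have "gam x a 0 \<in> closed_simplex {x}" unfolding closed_simplex_def gam_def by auto
  ultimately show ?thesis unfolding topspace_rips carrier_iff by blast
qed

lemma edge_in: "entourage E \<Longrightarrow> (x, a) \<in> E \<Longrightarrow> {x, a} \<times> {x, a} \<subseteq> E"
  using entourage_Id entourage_sym by blast

lemma cov_inj:
  assumes cov: "covering_map (rips E) (rips (pimage f E)) (push f)" and E: "entourage E"
    and xa: "(x, a) \<in> E" and xb: "(x, b) \<in> E" and fab: "f a = f b"
  shows "a = b"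
proof (rule ccontr)
  assume ab: "a \<noteq> b"
  obtain u where u: "openin (rips E) u" "gam x a 0 \<in> u" "inj_on (push f) u"
    using covering_sheet[OF cov vertex_top[OF E]] by metis
  have g0: "gam x b 0 = gam x a 0" by (simp add: gam_0)
  obtain e1 where e1: "e1 > 0" "\<forall>t. 0 < t \<longrightarrow> t < e1 \<longrightarrow> gam x a t \<in> u"
    using edge_open[OF u(1) edge_in[OF E xa] u(2)] by blast
  obtain e2 where e2: "e2 > 0" "\<forall>t. 0 < t \<longrightarrow> t < e2 \<longrightarrow> gam x b t \<in> u"
    using edge_open[OF u(1) edge_in[OF E xb]] u(2) g0 by auto
  define t where "t = min (min e1 e2) 1 / 2"
  have t: "0 < t" "t < e1" "t < e2" "t \<le> 1" using e1 e2 unfolding t_def by auto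
  have "push f (gam x a t) = push f (gam x b t)"
    using push_gam[of t f x a] push_gam[of t f x b] t fab by simp
  then have "gam x a t = gam x b t" using u(3) e1 e2 t unfolding inj_on_def by blast
  then have "gam x a t a = gam x b t a" by simp
  then show False using ab t unfolding gam_def by (cases "a = x") auto
qed

lemma forward_unique:
  assumes cov: "covering_map (rips E) (rips (pimage f E)) (push f)" and E: "entourage E"
  shows "\<forall>c d n. is_chain E c n \<and> is_chain E d n \<and> c 0 = d 0 \<and> (\<forall>i\<le>n. f (c i) = f (d i))
            \<longrightarrow> (\<forall>i\<le>n. c i = d i)"
proof (intro allI impI)
  fix c d n i assume H: "is_chain E c n \<and> is_chain E d n \<and> c 0 = d 0 \<and> (\<forall>i\<le>n. f (c i) = f (d i))"
    and "i \<le> n"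
  then show "c i = d i"
  proof (induction i)
    case 0 then show ?case by simp
  next
    case (Suc i)
    then have ci: "c i = d i" by simp
    have "(c i, c (Suc i)) \<in> E" "(d i, d (Suc i)) \<in> E" using Suc.prems unfolding is_chain_def by auto
    moreover have "f (c (Suc i)) = f (d (Suc i))" using Suc.prems by blast
    ultimately show ?case using cov_inj[OF cov E, of "c i" "c (Suc i)" "d (Suc i)"] ci by simp
  qed
qed

lemma pimage_sym: "entourage E \<Longrightarrow> (y, y') \<in> pimage f E \<Longrightarrow> (y', y) \<in> pimage f E"
  unfolding pimage_def using entourage_sym by fastforce

lemma lift_step:
  assumes cov: "covering_map (rips E) (rips (pimage f E)) (push f)" and E: "entourage E"
    and sf: "surj f" and yy: "(f x, y') \<in> pimage f E"
  shows "\<exists>x'. (x, x') \<in> E \<and> f x' = y'"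
proof (cases "y' = f x")
  case True then show ?thesis using entourage_Id[OF E] by blast
next
  case False
  obtain u where u: "openin (rips E) u" "gam x x 0 \<in> u"
    "\<And>U'. openin (rips E) U' \<Longrightarrow> U' \<subseteq> u \<Longrightarrow> openin (rips (pimage f E)) (push f ` U')"
    using covering_sheet[OF cov vertex_top[OF E]] by metis
  define U' where "U' = u \<inter> {\<alpha> \<in> realization_carrier (rips_simplices E). 0 < \<alpha> x}"
  have oU': "openin (rips E) U'" unfolding U'_def using u(1) openin_star by (rule openin_Int)
  then have op: "openin (rips (pimage f E)) (push f ` U')" using u(3) unfolding U'_def by blast
  have "gam x x 0 \<in> U'" unfolding U'_def using u(2) vertex_top[OF E, of x x]
    by (simp add: topspace_rips gam_def)
  then have "push f (gam x x 0) \<in> push f ` U'" by blast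
  moreover have "push f (gam x x 0) = gam (f x) y' 0" using push_gam[of 0 f x x] by (simp add: gam_0)
  ultimately have g0: "gam (f x) y' 0 \<in> push f ` U'" by simp
  obtain y0 where y0: "y' = f y0" using sf by (metis surjD)
  have p1: "(f x, f x) \<in> pimage f E" using pimage_mem[OF entourage_Id[OF E], of f x] .
  have p2: "(y', y') \<in> pimage f E" using pimage_mem[OF entourage_Id[OF E], of f y0] y0 by simp
  have edge: "{f x, y'} \<times> {f x, y'} \<subseteq> pimage f E"
    using yy pimage_sym[OF E yy] p1 p2 by blast
  obtain e where e: "e > 0" "\<forall>t. 0 < t \<longrightarrow> t < e \<longrightarrow> gam (f x) y' t \<in> push f ` U'"
    using edge_open[OF op edge g0] by blast
  define t where "t = min e 1 / 2"
  have t: "0 < t" "t < e" using e unfolding t_def by auto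
  then have "gam (f x) y' t \<in> push f ` U'" using e by blast
  then obtain \<alpha> where a: "\<alpha> \<in> U'" "push f \<alpha> = gam (f x) y' t" by (elim imageE) simp
  then have ax: "0 < \<alpha> x" and "\<alpha> \<in> realization_carrier (rips_simplices E)" unfolding U'_def by auto
  then obtain \<sigma> where s: "\<sigma> \<in> rips_simplices E" "\<alpha> \<in> closed_simplex \<sigma>" unfolding carrier_iff by blast
  then have fin: "finite \<sigma>" unfolding rips_simplices_def by auto
  have "push f \<alpha> y' = t" using a(2) False by (simp add: gam_def)
  then have "sum \<alpha> {v \<in> \<sigma>. f v = y'} \<noteq> 0" using push_cs_eq[OF fin s(2), of f y'] t by simp
  then have "{v \<in> \<sigma>. f v = y'} \<noteq> {}" by (metis sum.empty)
  then obtain v where v: "v \<in> \<sigma>" "f v = y'" by blast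
  have "\<alpha> x \<noteq> 0" using ax by simp
  then have "x \<in> \<sigma>" using cs_zero[OF s(2)] by blast
  then have "(x, v) \<in> E" using rips_edge[OF s(1)] v by blast
  then show ?thesis using v by blast
qed

lemma forward_lift:
  assumes cov: "covering_map (rips E) (rips (pimage f E)) (push f)" and E: "entourage E"
    and sf: "surj f"
  shows "\<forall>x0 (d :: nat \<Rightarrow> 'b) n. is_chain (pimage f E) d n \<and> d 0 = f x0 \<longrightarrow>
           (\<exists>c. is_chain E c n \<and> c 0 = x0 \<and> (\<forall>i\<le>n. f (c i) = d i))"
proof (intro allI impI)
  fix x0 and d :: "nat \<Rightarrow> 'b" and n
  assume H: "is_chain (pimage f E) d n \<and> d 0 = f x0"
  then show "\<exists>c. is_chain E c n \<and> c 0 = x0 \<and> (\<forall>i\<le>n. f (c i) = d i)"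
  proof (induction n)
    case 0
    then show ?case by (intro exI[of _ "\<lambda>_. x0"]) (auto simp: is_chain_def)
  next
    case (Suc n)
    then have "is_chain (pimage f E) d n" unfolding is_chain_def by auto
    then obtain c where c: "is_chain E c n" "c 0 = x0" "\<forall>i\<le>n. f (c i) = d i" using Suc by blast
    have "(d n, d (Suc n)) \<in> pimage f E" using Suc.prems unfolding is_chain_def by auto
    then have "(f (c n), d (Suc n)) \<in> pimage f E" using c(3) by simp
    then obtain x' where x': "(c n, x') \<in> E" "f x' = d (Suc n)" using lift_step[OF cov E sf] by blast
    define c' where "c' = c(Suc n := x')"
    have "is_chain E c' (Suc n)" unfolding is_chain_def
    proof (intro allI impI)
      fix i assume "i < Suc n"
      then consider "i < n" | "i = n" by linarith
      then show "(c' i, c' (Suc i)) \<in> E"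
      proof cases
        case 1 then show ?thesis using c(1) unfolding is_chain_def c'_def by auto
      next
        case 2 then show ?thesis using x' unfolding c'_def by auto
      qed
    qed
    moreover have "c' 0 = x0" using c(2) unfolding c'_def by simp
    moreover have "\<forall>i\<le>Suc n. f (c' i) = d i" using c(3) x'(2) unfolding c'_def by (auto simp: le_Suc_eq)
    ultimately show ?case by blast
  qed
qed

lemma forward:
  assumes gen: "generates_uniformity f" and u: "uniform_covering_map f"
  shows "chain_lifting f \<and> unique_chain_lifts f"
proof
  have sf: "surj f" using gen unfolding generates_uniformity_def by blast
  show "chain_lifting f" unfolding chain_lifting_def
  proof (intro allI impI)
    fix E0 :: "('a \<times> 'a) set" assume "entourage E0"
    then obtain E where E: "entourage E" "E \<subseteq> E0" "covering_map (rips E) (rips (pimage f E)) (push f)"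
      using u unfolding uniform_covering_map_def by blast
    have "\<forall>x0 (d :: nat \<Rightarrow> 'b) n. is_chain (pimage f E) d n \<and> d 0 = f x0 \<longrightarrow>
           (\<exists>c. is_chain E0 c n \<and> c 0 = x0 \<and> (\<forall>i\<le>n. f (c i) = d i))"
      using forward_lift[OF E(3) E(1) sf] E(2) unfolding is_chain_def by blast
    then show "\<exists>F. entourage F \<and> (\<forall>x0 (d :: nat \<Rightarrow> 'b) n. is_chain (pimage f F) d n \<and> d 0 = f x0 \<longrightarrow>
           (\<exists>c. is_chain E0 c n \<and> c 0 = x0 \<and> (\<forall>i\<le>n. f (c i) = d i)))"
      using E(1) by blast
  qed
  show "unique_chain_lifts f" unfolding unique_chain_lifts_def
  proof (intro allI impI)
    fix E0 :: "('a \<times> 'a) set"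
    obtain E where E: "entourage E" "covering_map (rips E) (rips (pimage f E)) (push f)"
      using u entourage_UNIV unfolding uniform_covering_map_def by blast
    then show "\<exists>F. entourage F \<and> (\<forall>c d n. is_chain F c n \<and> is_chain F d n \<and> c 0 = d 0 \<and> (\<forall>i\<le>n. f (c i) = f (d i))
            \<longrightarrow> (\<forall>i\<le>n. c i = d i))"
      using forward_unique[OF E(2) E(1)] by blast
  qed
qed


context
  fixes E :: "('a::uniform_space \<times> 'a) set" and f :: "'a \<Rightarrow> 'b::uniform_space"
  assumes E: "entourage E"
    and inj: "\<And>x a b. (x, a) \<in> E \<Longrightarrow> (x, b) \<in> E \<Longrightarrow> f a = f b \<Longrightarrow> a = b"
    and lift: "\<And>\<tau> x. \<tau> \<in> rips_simplices (pimage f E) \<Longrightarrow> f x \<in> \<tau> \<Longrightarrow>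
        \<exists>\<tau>'. \<tau>' \<in> rips_simplices E \<and> x \<in> \<tau>' \<and> f ` \<tau>' = \<tau> \<and> inj_on f \<tau>'"
    and sf: "surj f"
begin

abbreviation "KA \<equiv> rips_simplices E"
abbreviation "KB \<equiv> rips_simplices (pimage f E)"
abbreviation "stA x \<equiv> {\<alpha> \<in> realization_carrier KA. 0 < \<alpha> x}"
abbreviation "stB y \<equiv> {\<beta> \<in> realization_carrier KB. 0 < \<beta> y}"

lemma fin_simplex: "\<sigma> \<in> rips_simplices F \<Longrightarrow> finite \<sigma>"
  unfolding rips_simplices_def by auto

lemma push_local:
  assumes s: "\<sigma> \<in> KA" "\<gamma> \<in> closed_simplex \<sigma>" "x \<in> \<sigma>" and xv: "(x, v) \<in> E"
  shows "push f \<gamma> (f v) = \<gamma> v"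
proof -
  have fin: "finite \<sigma>" using fin_simplex[OF s(1)] .
  have sub: "{u \<in> \<sigma>. f u = f v} \<subseteq> {v}"
  proof
    fix u assume "u \<in> {u \<in> \<sigma>. f u = f v}"
    then have "u \<in> \<sigma>" "f u = f v" by auto
    then have "(x, u) \<in> E" using rips_edge[OF s(1) s(3)] by blast
    then show "u \<in> {v}" using inj[OF _ xv] \<open>f u = f v\<close> by blast
  qed
  show ?thesis
  proof (cases "v \<in> \<sigma>")
    case True
    then have "{u \<in> \<sigma>. f u = f v} = {v}" using sub by auto
    then show ?thesis using push_cs_eq[OF fin s(2), of f "f v"] by simp
  next
    case False
    then have "{u \<in> \<sigma>. f u = f v} = {}" using sub by auto
    moreover have "\<gamma> v = 0" using cs_zero[OF s(2)] False by blast
    ultimately show ?thesis using push_cs_eq[OF fin s(2), of f "f v"] by (metis sum.empty)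
  qed
qed

lemma star_inj:
  assumes a: "\<alpha> \<in> stA x" and b: "\<beta> \<in> stA x" and eq: "push f \<alpha> = push f \<beta>"
  shows "\<alpha> = \<beta>"
proof
  fix v
  obtain \<sigma>1 where s1: "\<sigma>1 \<in> KA" "\<alpha> \<in> closed_simplex \<sigma>1" using a unfolding carrier_iff by blast
  obtain \<sigma>2 where s2: "\<sigma>2 \<in> KA" "\<beta> \<in> closed_simplex \<sigma>2" using b unfolding carrier_iff by blast
  have x1: "x \<in> \<sigma>1" using cs_zero[OF s1(2), of x] a by auto
  have x2: "x \<in> \<sigma>2" using cs_zero[OF s2(2), of x] b by auto
  show "\<alpha> v = \<beta> v"
  proof (cases "\<alpha> v = 0 \<and> \<beta> v = 0")
    case True then show ?thesis by simp
  next
    case False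
    then have "v \<in> \<sigma>1 \<or> v \<in> \<sigma>2" using cs_zero[OF s1(2)] cs_zero[OF s2(2)] by blast
    then have xv: "(x, v) \<in> E" using rips_edge[OF s1(1) x1] rips_edge[OF s2(1) x2] by blast
    show ?thesis using push_local[OF s1 x1 xv] push_local[OF s2 x2 xv] eq by metis
  qed
qed

lemma push_star:
  assumes a: "\<alpha> \<in> stA x"
  shows "push f \<alpha> \<in> stB (f x)" "push f \<alpha> (f x) = \<alpha> x"
proof -
  obtain \<sigma> where s: "\<sigma> \<in> KA" "\<alpha> \<in> closed_simplex \<sigma>" using a unfolding carrier_iff by blast
  have x: "x \<in> \<sigma>" using cs_zero[OF s(2), of x] a by auto
  show eq: "push f \<alpha> (f x) = \<alpha> x" using push_local[OF s x entourage_Id[OF E]] .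
  have "push f \<alpha> \<in> closed_simplex (f ` \<sigma>)" using push_cs[OF fin_simplex[OF s(1)] s(2)] .
  then have "push f \<alpha> \<in> realization_carrier KB" unfolding carrier_iff using image_simplex[OF s(1)] by blast
  then show "push f \<alpha> \<in> stB (f x)" using eq a by simp
qed

definition hl :: "'a set \<Rightarrow> ('b \<Rightarrow> real) \<Rightarrow> ('a \<Rightarrow> real)" where
  "hl \<tau>' \<beta> = (\<lambda>v. if v \<in> \<tau>' then \<beta> (f v) else 0)"

lemma hl_props:
  assumes t: "\<tau>' \<in> KA" "f ` \<tau>' = \<tau>" "inj_on f \<tau>'" and b: "\<beta> \<in> closed_simplex \<tau>"
  shows "hl \<tau>' \<beta> \<in> closed_simplex \<tau>'" "push f (hl \<tau>' \<beta>) = \<beta>"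
proof -
  have fin: "finite \<tau>'" using fin_simplex[OF t(1)] .
  show hc: "hl \<tau>' \<beta> \<in> closed_simplex \<tau>'"
    unfolding closed_simplex_def
  proof (intro CollectI conjI allI impI)
    fix v show "0 \<le> hl \<tau>' \<beta> v" unfolding hl_def using cs_nonneg[OF b] by simp
    assume "v \<notin> \<tau>'" then show "hl \<tau>' \<beta> v = 0" unfolding hl_def by simp
  next
    have "sum (hl \<tau>' \<beta>) \<tau>' = sum (\<beta> \<circ> f) \<tau>'" unfolding hl_def by (intro sum.cong) auto
    also have "\<dots> = sum \<beta> (f ` \<tau>')" using sum.reindex[OF t(3), of \<beta>] by simp
    finally show "sum (hl \<tau>' \<beta>) \<tau>' = 1" using cs_sum[OF b] t(2) by simp
  qed
  show "push f (hl \<tau>' \<beta>) = \<beta>"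
  proof
    fix w
    have eq: "push f (hl \<tau>' \<beta>) w = sum (hl \<tau>' \<beta>) {v \<in> \<tau>'. f v = w}" using push_cs_eq[OF fin hc] .
    show "push f (hl \<tau>' \<beta>) w = \<beta> w"
    proof (cases "w \<in> \<tau>")
      case True
      then obtain v0 where v0: "v0 \<in> \<tau>'" "f v0 = w" using t(2) by blast
      then have "{v \<in> \<tau>'. f v = w} = {v0}" using t(3) unfolding inj_on_def by blast
      then show ?thesis using eq v0 unfolding hl_def by simp
    next
      case False
      then have "{v \<in> \<tau>'. f v = w} = {}" using t(2) by blast
      moreover have "\<beta> w = 0" using cs_zero[OF b] False by blast
      ultimately show ?thesis using eq by (metis sum.empty)
    qed
  qed
qed

lemma hl_continuous:
  "continuous_map (subtopology (powertop_real UNIV) (closed_simplex \<tau>)) (powertop_real UNIV) (hl \<tau>')"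
  unfolding continuous_map_componentwise_UNIV
proof
  fix v
  show "continuous_map (subtopology (powertop_real UNIV) (closed_simplex \<tau>)) euclideanreal (\<lambda>\<beta>. hl \<tau>' \<beta> v)"
  proof (cases "v \<in> \<tau>'")
    case True
    have "continuous_map (subtopology (powertop_real UNIV) (closed_simplex \<tau>)) euclideanreal (\<lambda>\<beta>. \<beta> (f v))"
      by (intro continuous_map_from_subtopology continuous_map_product_projection) simp
    then show ?thesis unfolding hl_def using True by simp
  next
    case False
    then show ?thesis unfolding hl_def by simp
  qed
qed

lemma star_surj:
  assumes "\<beta> \<in> stB (f x)"
  shows "\<beta> \<in> push f ` stA x"
proof -
  obtain \<tau> where t: "\<tau> \<in> KB" "\<beta> \<in> closed_simplex \<tau>" using assms unfolding carrier_iff by blast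
  have "f x \<in> \<tau>" using cs_zero[OF t(2), of "f x"] assms by auto
  then obtain \<tau>' where t': "\<tau>' \<in> KA" "x \<in> \<tau>'" "f ` \<tau>' = \<tau>" "inj_on f \<tau>'" using lift[OF t(1)] by blast
  have h: "hl \<tau>' \<beta> \<in> closed_simplex \<tau>'" "push f (hl \<tau>' \<beta>) = \<beta>"
    using hl_props[OF t'(1) t'(3) t'(4) t(2)] by auto
  have "hl \<tau>' \<beta> x = \<beta> (f x)" unfolding hl_def using t'(2) by simp
  then have "hl \<tau>' \<beta> \<in> stA x" using h(1) t'(1) assms unfolding carrier_iff by auto
  then show ?thesis using h(2) by force
qed

lemma star_open_map:
  assumes U: "openin (rips E) U" "U \<subseteq> stA x"
  shows "openin (rips (pimage f E)) (push f ` U)"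
  unfolding openin_rips
proof (rule conjI[OF _ ballI])
  show "push f ` U \<subseteq> realization_carrier KB" using push_star(1) U(2) by blast
  fix \<tau> assume t: "\<tau> \<in> KB"
  show "openin (subtopology (powertop_real UNIV) (closed_simplex \<tau>)) (push f ` U \<inter> closed_simplex \<tau>)"
  proof (cases "f x \<in> \<tau>")
    case False
    have "push f ` U \<inter> closed_simplex \<tau> = {}"
    proof (rule ccontr)
      assume "push f ` U \<inter> closed_simplex \<tau> \<noteq> {}"
      then obtain \<alpha> where a: "\<alpha> \<in> U" "push f \<alpha> \<in> closed_simplex \<tau>" by blast
      have "0 < push f \<alpha> (f x)" using push_star(1)[of \<alpha>] a(1) U(2) by blast
      then show False using cs_zero[OF a(2), of "f x"] False by simp
    qed
    then show ?thesis by simp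
  next
    case True
    then obtain \<tau>' where t': "\<tau>' \<in> KA" "x \<in> \<tau>'" "f ` \<tau>' = \<tau>" "inj_on f \<tau>'" using lift[OF t] by blast
    have "openin (subtopology (powertop_real UNIV) (closed_simplex \<tau>')) (U \<inter> closed_simplex \<tau>')"
      using U(1) t'(1) unfolding openin_rips by blast
    then obtain W where W: "openin (powertop_real UNIV) W" "U \<inter> closed_simplex \<tau>' = W \<inter> closed_simplex \<tau>'"
      unfolding openin_subtopology by blast
    have op: "openin (subtopology (powertop_real UNIV) (closed_simplex \<tau>))
       {\<beta> \<in> topspace (subtopology (powertop_real UNIV) (closed_simplex \<tau>)). hl \<tau>' \<beta> \<in> W}"
      by (rule openin_continuous_map_preimage[OF hl_continuous W(1)])
    have "{\<beta> \<in> topspace (subtopology (powertop_real UNIV) (closed_simplex \<tau>)). hl \<tau>' \<beta> \<in> W}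
       = push f ` U \<inter> closed_simplex \<tau>"
    proof (rule set_eqI)
      fix \<beta>
      have ts: "\<beta> \<in> topspace (subtopology (powertop_real UNIV) (closed_simplex \<tau>)) \<longleftrightarrow> \<beta> \<in> closed_simplex \<tau>"
        by simp
      show "\<beta> \<in> {\<beta> \<in> topspace (subtopology (powertop_real UNIV) (closed_simplex \<tau>)). hl \<tau>' \<beta> \<in> W}
         \<longleftrightarrow> \<beta> \<in> push f ` U \<inter> closed_simplex \<tau>"
      proof
        assume "\<beta> \<in> {\<beta> \<in> topspace (subtopology (powertop_real UNIV) (closed_simplex \<tau>)). hl \<tau>' \<beta> \<in> W}"
        then have b: "\<beta> \<in> closed_simplex \<tau>" "hl \<tau>' \<beta> \<in> W" using ts by auto
        have h: "hl \<tau>' \<beta> \<in> closed_simplex \<tau>'" "push f (hl \<tau>' \<beta>) = \<beta>"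
          using hl_props[OF t'(1) t'(3) t'(4) b(1)] by auto
        then have "hl \<tau>' \<beta> \<in> U" using W(2) b(2) by blast
        then show "\<beta> \<in> push f ` U \<inter> closed_simplex \<tau>" using h(2) b(1) by force
      next
        assume "\<beta> \<in> push f ` U \<inter> closed_simplex \<tau>"
        then obtain \<alpha> where a: "\<alpha> \<in> U" "\<beta> = push f \<alpha>" and b: "\<beta> \<in> closed_simplex \<tau>" by blast
        have h: "hl \<tau>' \<beta> \<in> closed_simplex \<tau>'" "push f (hl \<tau>' \<beta>) = \<beta>"
          using hl_props[OF t'(1) t'(3) t'(4) b] by auto
        have ax: "\<alpha> \<in> stA x" using a(1) U(2) by blast
        have "hl \<tau>' \<beta> x = \<beta> (f x)" unfolding hl_def using t'(2) by simp
        also have "\<dots> = \<alpha> x" using push_star(2)[OF ax] a(2) by simp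
        finally have "hl \<tau>' \<beta> \<in> stA x" using ax h(1) t'(1) unfolding carrier_iff by auto
        then have "hl \<tau>' \<beta> = \<alpha>" using star_inj[OF _ ax] h(2) a(2) by blast
        then have "hl \<tau>' \<beta> \<in> U \<inter> closed_simplex \<tau>'" using a(1) h(1) by simp
        then have "hl \<tau>' \<beta> \<in> W" using W(2) by blast
        then show "\<beta> \<in> {\<beta> \<in> topspace (subtopology (powertop_real UNIV) (closed_simplex \<tau>)). hl \<tau>' \<beta> \<in> W}"
          using ts b by blast
      qed
    qed
    then show ?thesis using op by simp
  qed
qed

lemma exists_pos:
  assumes "\<tau> \<in> rips_simplices F" "\<beta> \<in> closed_simplex \<tau>"
  shows "\<exists>y. 0 < \<beta> y"
proof (rule ccontr)
  assume "\<not> (\<exists>y. 0 < \<beta> y)"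
  then have "\<forall>y. \<beta> y \<le> 0" by (simp add: not_less)
  then have "sum \<beta> \<tau> \<le> 0" by (simp add: sum_nonpos)
  then show False using cs_sum[OF assms(2)] by simp
qed

lemma covering: "covering_map (rips E) (rips (pimage f E)) (push f)"
  unfolding covering_map_def
proof (intro conjI ballI)
  show cm: "continuous_map (rips E) (rips (pimage f E)) (push f)" by (rule push_continuous)
  show "push f ` topspace (rips E) = topspace (rips (pimage f E))"
  proof
    show "push f ` topspace (rips E) \<subseteq> topspace (rips (pimage f E))"
      using continuous_map_image_subset_topspace[OF cm] .
    show "topspace (rips (pimage f E)) \<subseteq> push f ` topspace (rips E)"
    proof
      fix \<beta> assume "\<beta> \<in> topspace (rips (pimage f E))"
      then obtain \<tau> where t: "\<tau> \<in> KB" "\<beta> \<in> closed_simplex \<tau>" unfolding topspace_rips carrier_iff by blast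
      obtain y where y: "0 < \<beta> y" using exists_pos[OF t] by blast
      obtain x where x: "y = f x" using sf by (metis surjD)
      have "\<beta> \<in> stB (f x)" using t y x unfolding carrier_iff by auto
      then show "\<beta> \<in> push f ` topspace (rips E)" using star_surj[of \<beta> x] unfolding topspace_rips by blast
    qed
  qed
  fix b assume "b \<in> topspace (rips (pimage f E))"
  then obtain \<tau> where t: "\<tau> \<in> KB" "b \<in> closed_simplex \<tau>" unfolding topspace_rips carrier_iff by blast
  obtain y where y: "0 < b y" using exists_pos[OF t] by blast
  define V where "V = (\<lambda>x. stA x) ` {x. f x = y}"
  show "\<exists>T. b \<in> T \<and> openin (rips (pimage f E)) T \<and>
        (\<exists>V. \<Union>V = {x \<in> topspace (rips E). push f x \<in> T} \<and>
             (\<forall>u\<in>V. openin (rips E) u) \<and> pairwise disjnt V \<and>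
             (\<forall>u\<in>V. homeomorphic_map (subtopology (rips E) u) (subtopology (rips (pimage f E)) T) (push f)))"
  proof (intro exI[of _ "stB y"] conjI exI[of _ V] ballI)
    show "b \<in> stB y" using t y unfolding carrier_iff by auto
    show oT: "openin (rips (pimage f E)) (stB y)" by (rule openin_star)
    show "\<Union>V = {x \<in> topspace (rips E). push f x \<in> stB y}"
    proof
      show "\<Union>V \<subseteq> {x \<in> topspace (rips E). push f x \<in> stB y}"
        unfolding V_def topspace_rips using push_star(1) by blast
      show "{x \<in> topspace (rips E). push f x \<in> stB y} \<subseteq> \<Union>V"
      proof
        fix \<alpha> assume "\<alpha> \<in> {x \<in> topspace (rips E). push f x \<in> stB y}"
        then have a: "\<alpha> \<in> realization_carrier KA" "0 < push f \<alpha> y" unfolding topspace_rips by auto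
        then obtain \<sigma> where s: "\<sigma> \<in> KA" "\<alpha> \<in> closed_simplex \<sigma>" unfolding carrier_iff by blast
        have "0 < sum \<alpha> {v \<in> \<sigma>. f v = y}" using a(2) push_cs_eq[OF fin_simplex[OF s(1)] s(2), of f y] by simp
        then obtain v where v: "v \<in> \<sigma>" "f v = y" "0 < \<alpha> v"
        proof -
          assume th: "\<And>v. v \<in> \<sigma> \<Longrightarrow> f v = y \<Longrightarrow> 0 < \<alpha> v \<Longrightarrow> thesis"
          show thesis
          proof (rule ccontr)
            assume nt: "\<not> thesis"
            have "\<alpha> v \<le> 0" if "v \<in> \<sigma>" "f v = y" for v
            proof (rule ccontr)
              assume "\<not> \<alpha> v \<le> 0"
              then have "0 < \<alpha> v" by simp
              then show False using th[OF that] nt by blast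
            qed
            then have "sum \<alpha> {v \<in> \<sigma>. f v = y} \<le> 0" by (intro sum_nonpos) blast
            then show False using \<open>0 < sum \<alpha> {v \<in> \<sigma>. f v = y}\<close> by simp
          qed
        qed
        then have "\<alpha> \<in> stA v" using a(1) by simp
        then show "\<alpha> \<in> \<Union>V" unfolding V_def using v(2) by blast
      qed
    qed
    show "pairwise disjnt V"
      unfolding pairwise_def disjnt_def
    proof (intro ballI impI)
      fix u1 u2 assume u: "u1 \<in> V" "u2 \<in> V" "u1 \<noteq> u2"
      then obtain x1 x2 where x12: "f x1 = y" "u1 = stA x1" "f x2 = y" "u2 = stA x2" unfolding V_def by blast
      show "u1 \<inter> u2 = {}"
      proof (rule ccontr)
        assume "u1 \<inter> u2 \<noteq> {}"
        then obtain \<alpha> where a: "\<alpha> \<in> stA x1" "\<alpha> \<in> stA x2" using x12 by blast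
        then obtain \<sigma> where s: "\<sigma> \<in> KA" "\<alpha> \<in> closed_simplex \<sigma>" unfolding carrier_iff by blast
        have "x1 \<in> \<sigma>" "x2 \<in> \<sigma>" using cs_zero[OF s(2), of x1] cs_zero[OF s(2), of x2] a by auto
        then have "(x1, x2) \<in> E" using rips_edge[OF s(1)] by blast
        then have "x1 = x2" using inj[OF entourage_Id[OF E]] x12 by metis
        then show False using u(3) x12 by simp
      qed
    qed
    fix u assume "u \<in> V"
    then obtain x where x: "f x = y" "u = stA x" unfolding V_def by blast
    show ou: "openin (rips E) u" using x(2) openin_star by simp
    have tsu: "topspace (subtopology (rips E) u) = stA x" using x(2) by (auto simp: topspace_rips)
    have tsT: "topspace (subtopology (rips (pimage f E)) (stB y)) = stB y" by (auto simp: topspace_rips)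
    show "homeomorphic_map (subtopology (rips E) u) (subtopology (rips (pimage f E)) (stB y)) (push f)"
    proof (rule bijective_open_imp_homeomorphic_map)
      show "continuous_map (subtopology (rips E) u) (subtopology (rips (pimage f E)) (stB y)) (push f)"
        by (rule continuous_map_into_subtopology[OF continuous_map_from_subtopology[OF cm]])
           (use tsu push_star(1) x(1) in blast)
      show "open_map (subtopology (rips E) u) (subtopology (rips (pimage f E)) (stB y)) (push f)"
        unfolding open_map_def
      proof (intro allI impI)
        fix U assume U: "openin (subtopology (rips E) u) U"
        then have U1: "openin (rips E) U" using openin_trans_full ou by blast
        have U2: "U \<subseteq> stA x" using openin_subset[OF U] tsu by blast
        have "openin (rips (pimage f E)) (push f ` U)" using star_open_map[OF U1 U2] .
        moreover have "push f ` U \<subseteq> stB y" using U2 push_star(1) x(1) by blast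
        ultimately show "openin (subtopology (rips (pimage f E)) (stB y)) (push f ` U)"
          unfolding openin_subtopology by (intro exI[of _ "push f ` U"] conjI) auto
      qed
      show "push f ` topspace (subtopology (rips E) u) = topspace (subtopology (rips (pimage f E)) (stB y))"
        unfolding tsu tsT using push_star(1) star_surj x(1) by blast
      show "inj_on (push f) (topspace (subtopology (rips E) u))"
        unfolding tsu inj_on_def using star_inj by blast
    qed
  qed
qed

end


lemma entourage_Int: "entourage A \<Longrightarrow> entourage B \<Longrightarrow> entourage (A \<inter> B)"
  unfolding entourage_def sym_def
proof (elim conjE, intro conjI allI impI)
  assume "eventually (\<lambda>p. p \<in> A) uniformity" "eventually (\<lambda>p. p \<in> B) uniformity"
  then have "eventually (\<lambda>p. p \<in> A \<and> p \<in> B) uniformity" by (rule eventually_conj)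
  then show "eventually (\<lambda>p. p \<in> A \<inter> B) uniformity" by simp
qed auto

lemma entourage_mono: "entourage A \<Longrightarrow> A \<subseteq> B \<Longrightarrow> sym B \<Longrightarrow> entourage B"
  unfolding entourage_def by (auto elim: eventually_mono)

lemma entourage_half:
  assumes H: "entourage (H :: ('a::uniform_space \<times> 'a) set)"
  shows "\<exists>G. entourage G \<and> (\<forall>x y z. (x, y) \<in> G \<longrightarrow> (y, z) \<in> G \<longrightarrow> (x, z) \<in> H)"
proof -
  have "eventually (\<lambda>p. p \<in> H) uniformity" using H unfolding entourage_def by blast
  then obtain D where D: "eventually D uniformity" "\<And>x y z. D (x, y) \<Longrightarrow> D (y, z) \<Longrightarrow> (x, z) \<in> H"
    by (rule uniformity_transE) blast
  have D': "eventually (\<lambda>(x, y). D (y, x)) uniformity" using uniformity_sym[OF D(1)] .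
  define G where "G = {p. D p \<and> (case p of (x, y) \<Rightarrow> D (y, x))}"
  have "eventually (\<lambda>p. D p \<and> (case p of (x, y) \<Rightarrow> D (y, x))) uniformity"
    using eventually_conj[OF D(1) D'] by simp
  then have ev: "eventually (\<lambda>p. p \<in> G) uniformity" unfolding G_def by simp
  have "sym G" unfolding G_def sym_def by auto
  moreover have "Id \<subseteq> G" unfolding G_def using uniformity_refl[OF D(1)] by auto
  ultimately have "entourage G" using ev unfolding entourage_def by blast
  moreover have "\<forall>x y z. (x, y) \<in> G \<longrightarrow> (y, z) \<in> G \<longrightarrow> (x, z) \<in> H" unfolding G_def using D(2) by auto
  ultimately show ?thesis by blast
qed

lemma pimage_mono: "A \<subseteq> B \<Longrightarrow> pimage f A \<subseteq> pimage f B"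
  unfolding pimage_def by blast

lemma pimage_iff: "(y, y') \<in> pimage f A \<longleftrightarrow> (\<exists>a b. (a, b) \<in> A \<and> y = f a \<and> y' = f b)"
  unfolding pimage_def by force

lemma backward:
  fixes f :: "'a::uniform_space \<Rightarrow> 'b::uniform_space"
  assumes gen: "generates_uniformity f" and cl: "chain_lifting f" and ul: "unique_chain_lifts f"
  shows "uniform_covering_map f"
  unfolding uniform_covering_map_def
proof (intro conjI allI impI gen)
  have sf: "surj f" using gen unfolding generates_uniformity_def by blast
  fix D :: "('a \<times> 'a) set" assume De: "entourage D"
  obtain Fu where Fu: "entourage Fu" "\<forall>c d n. is_chain Fu c n \<and> is_chain Fu d n \<and> c 0 = d 0 \<and> (\<forall>i\<le>n. f (c i) = f (d i))
            \<longrightarrow> (\<forall>i\<le>n. c i = d i)"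
    using ul entourage_UNIV unfolding unique_chain_lifts_def by blast
  have injFu: "a = b" if "(z, a) \<in> Fu" "(z, b) \<in> Fu" "f a = f b" for z a b
  proof -
    let ?c = "\<lambda>i::nat. if i = 0 then z else a"
    let ?d = "\<lambda>i::nat. if i = 0 then z else b"
    have A: "is_chain Fu ?c 1 \<and> is_chain Fu ?d 1 \<and> ?c 0 = ?d 0 \<and> (\<forall>i\<le>1. f (?c i) = f (?d i))"
      using that unfolding is_chain_def by (simp add: le_Suc_eq)
    have "\<forall>i\<le>1. ?c i = ?d i"
      by (rule mp[OF Fu(2)[THEN spec[where x="\<lambda>i::nat. if i = 0 then z else a"],
            THEN spec[where x="\<lambda>i::nat. if i = 0 then z else b"], THEN spec[where x=1]] A])
    then have "?c 1 = ?d 1" by blast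
    then show "a = b" by simp
  qed
  define H where "H = D \<inter> Fu"
  have He: "entourage H" unfolding H_def using entourage_Int[OF De Fu(1)] .
  obtain G where G: "entourage G" "\<forall>x y z. (x, y) \<in> G \<longrightarrow> (y, z) \<in> G \<longrightarrow> (x, z) \<in> H"
    using entourage_half[OF He] by blast
  have GH: "G \<subseteq> H"
  proof
    fix p assume "p \<in> G"
    then obtain x y where "p = (x, y)" "(x, y) \<in> G" by (cases p) auto
    then show "p \<in> H" using G(2) entourage_Id[OF G(1), of y] by blast
  qed
  obtain FG where FG: "entourage FG" "\<forall>x0 (d :: nat \<Rightarrow> 'b) n. is_chain (pimage f FG) d n \<and> d 0 = f x0 \<longrightarrow>
           (\<exists>c. is_chain G c n \<and> c 0 = x0 \<and> (\<forall>i\<le>n. f (c i) = d i))"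
    using cl G(1) unfolding chain_lifting_def by blast
  define K where "K = FG \<inter> H"
  have Ke: "entourage K" unfolding K_def using entourage_Int[OF FG(1) He] .
  define P where "P = {p. (f (fst p), f (snd p)) \<in> pimage f K}"
  have KP: "K \<subseteq> P" unfolding P_def using pimage_mem by fastforce
  have symP: "sym P" unfolding P_def sym_def using pimage_sym[OF Ke] by auto
  define E where "E = H \<inter> P"
  have Ee: "entourage E" unfolding E_def using entourage_Int[OF He entourage_mono[OF Ke KP symP]] .
  have ED: "E \<subseteq> D" unfolding E_def H_def by blast
  have EFu: "E \<subseteq> Fu" unfolding E_def H_def by blast
  have pEK: "pimage f E = pimage f K"
  proof
    show "pimage f E \<subseteq> pimage f K" unfolding E_def P_def pimage_def by force
    have "K \<subseteq> E" unfolding E_def K_def using KP K_def by blast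
    then show "pimage f K \<subseteq> pimage f E" by (rule pimage_mono)
  qed
  have pKFG: "pimage f K \<subseteq> pimage f FG" unfolding K_def by (rule pimage_mono) blast
  have injE: "a = b" if "(x, a) \<in> E" "(x, b) \<in> E" "f a = f b" for x a b
    using injFu[of x a b] that EFu by (simp add: subset_iff)
  have lift: "\<exists>\<tau>'. \<tau>' \<in> rips_simplices E \<and> x \<in> \<tau>' \<and> f ` \<tau>' = \<tau> \<and> inj_on f \<tau>'"
    if t: "\<tau> \<in> rips_simplices (pimage f E)" "f x \<in> \<tau>" for \<tau> x
  proof -
    have tt: "\<tau> \<times> \<tau> \<subseteq> pimage f FG" "finite \<tau>" "\<tau> \<noteq> {}"
      using t(1) pEK pKFG unfolding rips_simplices_def by auto
    have tE: "\<tau> \<times> \<tau> \<subseteq> pimage f E" using t(1) unfolding rips_simplices_def by auto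
    have "\<exists>z. (x, z) \<in> G \<and> f z = w" if w: "w \<in> \<tau>" for w
    proof -
      let ?d = "\<lambda>i::nat. if i = 0 then f x else w"
      have "is_chain (pimage f FG) ?d 1" unfolding is_chain_def using tt(1) t(2) w by auto
      then have A: "is_chain (pimage f FG) ?d 1 \<and> ?d 0 = f x" by simp
      have "\<exists>c. is_chain G c 1 \<and> c 0 = x \<and> (\<forall>i\<le>1. f (c i) = ?d i)"
        by (rule mp[OF FG(2)[THEN spec[where x=x], THEN spec[where x="\<lambda>i::nat. if i = 0 then f x else w"], THEN spec[where x=1]] A])
      then obtain c where c: "is_chain G c 1" "c 0 = x" "\<forall>i\<le>1. f (c i) = ?d i" by blast
      have "(c 0, c 1) \<in> G" using c(1) unfolding is_chain_def by simp
      then have "(x, c 1) \<in> G" using c(2) by simp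
      moreover have "f (c 1) = w" using c(3) by simp
      ultimately show ?thesis by blast
    qed
    then obtain g where g: "\<forall>w\<in>\<tau>. (x, g w) \<in> G \<and> f (g w) = w" by metis
    have gFu: "(x, g w) \<in> Fu" if "w \<in> \<tau>" for w
    proof -
      have "(x, g w) \<in> G" using g that by blast
      then show ?thesis using GH unfolding H_def by blast
    qed
    have gx: "g (f x) = x"
      using injFu[OF gFu[OF t(2)] entourage_Id[OF Fu(1), of x]] g t(2) by metis
    have pair: "(g w, g w') \<in> E" if w: "w \<in> \<tau>" "w' \<in> \<tau>" for w w'
    proof -
      let ?d = "\<lambda>i::nat. if i = 0 then f x else if i = 1 then w else w'"
      have "(f x, w) \<in> pimage f FG" "(w, w') \<in> pimage f FG" using tt(1) t(2) w by auto
      then have "is_chain (pimage f FG) ?d 2" unfolding is_chain_def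
        by (auto simp: less_Suc_eq numeral_2_eq_2)
      then have A: "is_chain (pimage f FG) ?d 2 \<and> ?d 0 = f x" by simp
      have "\<exists>c. is_chain G c 2 \<and> c 0 = x \<and> (\<forall>i\<le>2. f (c i) = ?d i)"
        by (rule mp[OF FG(2)[THEN spec[where x=x], THEN spec[where x="\<lambda>i::nat. if i = 0 then f x else if i = 1 then w else w'"], THEN spec[where x=2]] A])
      then obtain c where c: "is_chain G c 2" "c 0 = x" "\<forall>i\<le>2. f (c i) = ?d i" by blast
      have c01: "(c 0, c 1) \<in> G" and c12: "(c 1, c 2) \<in> G" using c(1) unfolding is_chain_def
        by (auto simp: numeral_2_eq_2)
      have f1: "f (c 1) = w" using c(3) by auto
      have f2: "f (c 2) = w'" using c(3) by auto
      have "(c 0, c 1) \<in> Fu" using c01 GH unfolding H_def by blast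
      then have x1: "(x, c 1) \<in> Fu" using c(2) by simp
      have "(c 0, c 2) \<in> H" using G(2) c01 c12 by blast
      then have "(x, c 2) \<in> H" using c(2) by simp
      then have x2: "(x, c 2) \<in> Fu" unfolding H_def by blast
      have e1: "c 1 = g w" using injFu[OF x1 gFu[OF w(1)]] f1 g w(1) by metis
      have e2: "c 2 = g w'" using injFu[OF x2 gFu[OF w(2)]] f2 g w(2) by metis
      have "(c 1, c 2) \<in> H" using c12 GH by blast
      then have "(g w, g w') \<in> H" using e1 e2 by simp
      moreover have "(f (g w), f (g w')) \<in> pimage f K" using tE w g pEK by auto
      ultimately show ?thesis unfolding E_def P_def by simp
    qed
    show ?thesis
    proof (intro exI[of _ "g ` \<tau>"] conjI)
      show "g ` \<tau> \<in> rips_simplices E" unfolding rips_simplices_def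
        using tt(2,3) pair by auto
      show "x \<in> g ` \<tau>" using gx t(2) by force
      show "f ` g ` \<tau> = \<tau>" using g by force
      show "inj_on f (g ` \<tau>)" unfolding inj_on_def using g by auto
    qed
  qed
  have "covering_map (rips E) (rips (pimage f E)) (push f)"
    by (rule covering[OF Ee injE lift sf]) auto
  then show "\<exists>E. entourage E \<and> E \<subseteq> D \<and> covering_map (rips E) (rips (pimage f E)) (push f)"
    using Ee ED by blast
qed

theorem mainTheorem3:
  fixes f :: "'a::uniform_space \<Rightarrow> 'b::uniform_space"
  assumes "generates_uniformity f"
  shows "uniform_covering_map f \<longleftrightarrow> chain_lifting f \<and> unique_chain_lifts f"
  using forward[OF assms] backward[OF assms] by blast

end
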